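(* Let $\mathbf u$ be an infinite word over a finite alphabet whose language is closed under reversal and whose defect $D(\mathbf u)$ is finite. Let $q$ be a prefix of $\mathbf u$ such that $D(\mathbf u)=D(q)$, and put $H=|q|+1$. Then $$\mathcal C_{\mathbf u}(H)-\mathcal P_{\mathbf u}(H)=2\,\#\{x\in\mathcal L(\mathbf u): x \text{ is a palindrome},\ |x|<H,\ x\notin\mathcal L(q)\}.$$
   Context: For a finite word $w=w_0\cdots w_{n-1}$ its reversal is $\overline{w}=w_{n-1}\cdots w_0$; $w$ is a palindrome if $w=\overline{w}$ (the empty word is a palindrome). $\mathcal L(v)$ denotes the set of factors of a (finite or infinite) word $v$, and $\mathcal L_n(v)$ those of length $n$; the language of $\mathbf u$ is closed under reversal if $w\in\mathcal L(\mathbf u)$ implies $\overline w\in\mathcal L(\mathbf u)$. $\mathcal C_{\mathbf u}(n)=\#\mathcal L_n(\mathbf u)$ and $\mathcal P_{\mathbf u}(n)$ is the number of palindromes in $\mathcal L_n(\mathbf u)$. The defect of a finite word $w$ is $D(w)=|w|+1-(\text{number of distinct palindromic factors of } w, \text{ including the empty word})$; the defect of an infinite word is $D(\mathbf u)=\sup\{D(w): w \text{ a prefix of } \mathbf u\}$. *)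

theory Defs
  imports Main "HOL-Library.Extended_Nat" "HOL-Library.Sublist"
begin

definition pal :: "'a list \<Rightarrow> bool" where
  "pal w \<longleftrightarrow> rev w = w"

definition lang :: "(nat \<Rightarrow> 'a) \<Rightarrow> 'a list set" where
  "lang u = {w. \<exists>i. w = map u [i..<i + length w]}"

definition lang_n :: "(nat \<Rightarrow> 'a) \<Rightarrow> nat \<Rightarrow> 'a list set" where
  "lang_n u n = {w \<in> lang u. length w = n}"

definition lang_fin :: "'a list \<Rightarrow> 'a list set" where
  "lang_fin w = {x. sublist x w}"

definition closed_rev :: "(nat \<Rightarrow> 'a) \<Rightarrow> bool" where
  "closed_rev u \<longleftrightarrow> (\<forall>w \<in> lang u. rev w \<in> lang u)"

definition complexity :: "(nat \<Rightarrow> 'a) \<Rightarrow> nat \<Rightarrow> nat" where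
  "complexity u n = card (lang_n u n)"

definition pal_complexity :: "(nat \<Rightarrow> 'a) \<Rightarrow> nat \<Rightarrow> nat" where
  "pal_complexity u n = card {w \<in> lang_n u n. pal w}"

text \<open>Defect of a finite word (palindromic factors include the empty word).\<close>
definition defect :: "'a list \<Rightarrow> int" where
  "defect w = int (length w) + 1 - int (card {x \<in> lang_fin w. pal x})"

definition pref :: "(nat \<Rightarrow> 'a) \<Rightarrow> nat \<Rightarrow> 'a list" where
  "pref u n = map u [0..<n]"

text \<open>Defect of an infinite word: supremum over prefixes (defect is always >= 0).\<close>
definition defect_inf :: "(nat \<Rightarrow> 'a) \<Rightarrow> enat" where
  "defect_inf u = (SUP n. enat (nat (defect (pref u n))))"

end

theory Submission
  imports Defs
begin

definition palf :: "'a list \<Rightarrow> 'a list set" where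
  "palf w = {x. sublist x w \<and> pal x}"

definition EE :: "nat \<Rightarrow> 'a list \<Rightarrow> 'a list set" where
  "EE H p = {w. length w = H \<and> \<not> pal w \<and> (sublist w p \<or> sublist (rev w) p)}"

definition GG :: "nat \<Rightarrow> 'a list set \<Rightarrow> 'a list \<Rightarrow> 'a list set" where
  "GG H Q p = {x. sublist x p \<and> pal x \<and> length x < H \<and> x \<notin> Q}"

lemma fin_sub: "finite {x. sublist x w}"
  by (metis set_sublists_eq List.finite_set)

lemma fin_palf: "finite (palf w)"
  unfolding palf_def by (rule finite_subset[OF _ fin_sub]) auto

lemma fin_EE: "finite (EE H p)"
proof -
  have "EE H p \<subseteq> {x. sublist x p} \<union> rev ` {x. sublist x p}"
    unfolding EE_def by (auto intro: image_eqI[where x="rev _"])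
  thus ?thesis by (rule finite_subset) (simp add: fin_sub)
qed

lemma fin_GG: "finite (GG H Q p)"
  unfolding GG_def by (rule finite_subset[OF _ fin_sub]) auto

lemma pfx_in:
  assumes "suffix s (xs @ [a])" "prefix t s" "length t < length s"
  shows "sublist t xs"
proof -
  have "s \<noteq> []" using assms(3) by auto
  then obtain s' where s': "s = s' @ [a]" "suffix s' xs" using assms(1) by (auto simp: suffix_snoc)
  have "prefix t s'" using assms(2,3) s'(1) by (auto simp: prefix_snoc)
  thus ?thesis using s'(2)
    by (meson prefix_imp_sublist suffix_imp_sublist sublist_order.order.trans)
qed

lemma suffix_eq_len: "suffix y w \<Longrightarrow> length y = length w \<Longrightarrow> y = w"
  by (auto simp: suffix_def)

lemma pal_suffix_prefix:
  assumes "pal s" "suffix t s" shows "prefix (rev t) s"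
  using assms by (metis pal_def suffix_to_prefix)

lemma new_pal_le:
  assumes "s \<in> palf (xs@[a]) - palf xs" "t \<in> palf (xs@[a]) - palf xs"
    "length t \<le> length s"
  shows "t = s"
proof -
  have s: "suffix s (xs@[a])" "pal s" "\<not> sublist s xs"
    using assms(1) by (auto simp: palf_def sublist_snoc)
  have t: "suffix t (xs@[a])" "pal t" "\<not> sublist t xs"
    using assms(2) by (auto simp: palf_def sublist_snoc)
  have ts: "suffix t s" using suffix_length_suffix[OF t(1) s(1) assms(3)] .
  show ?thesis
  proof (cases "length t = length s")
    case True thus ?thesis using ts suffix_eq_len by blast
  next
    case False
    have "prefix (rev t) s" using pal_suffix_prefix[OF s(2) ts] .
    hence "prefix t s" using t(2) by (simp add: pal_def)
    hence "sublist t xs" using pfx_in[OF s(1)] False assms(3) by simp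
    thus ?thesis using t(3) by simp
  qed
qed

lemma new_pal_card: "card (palf (xs@[a]) - palf xs) \<le> 1"
proof -
  have "finite (palf (xs@[a]) - palf xs)" using fin_palf by auto
  moreover have "\<forall>s\<in>palf (xs@[a]) - palf xs. \<forall>t\<in>palf (xs@[a]) - palf xs. s = t"
    using new_pal_le by (metis nat_le_linear)
  ultimately show ?thesis using card_le_Suc0_iff_eq by auto
qed

lemma palf_mono: "palf xs \<subseteq> palf (xs@[a])"
  unfolding palf_def by (auto intro: sublist_order.order.trans)

lemma palf_card_step: "card (palf (xs@[a])) \<le> card (palf xs) + 1"
  using new_pal_card[of xs a] card_Diff_subset[OF fin_palf palf_mono, of xs a]
    card_mono[OF fin_palf palf_mono, of xs a] by linarith

lemma palf_card_le: "card (palf xs) \<le> length xs + 1"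
proof (induction xs rule: rev_induct)
  case Nil
  have "palf ([]::'a list) = {[]}" by (auto simp: palf_def pal_def)
  thus ?case by simp
next
  case (snoc x xs)
  thus ?case using palf_card_step[of xs x] by simp
qed

lemma defect_palf: "defect w = int (length w) + 1 - int (card (palf w))"
  unfolding defect_def palf_def lang_fin_def by simp

lemma defect_nonneg: "defect w \<ge> 0"
  using palf_card_le[of w] unfolding defect_palf by linarith

lemma defect_step: "defect w \<le> defect (w @ [a])"
  using palf_card_step[of w a] unfolding defect_palf by simp

lemma step_main:
  assumes c: "card (palf (p@[a])) = card (palf p) + 1"
    and HL: "H \<le> length p + 1"
    and Q: "Q \<subseteq> {x. sublist x p}"
  shows "(EE H (p@[a]) = EE H p \<and> GG H Q (p@[a]) = GG H Q p) \<or>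
         (card (EE H (p@[a])) = card (EE H p) + 2 \<and> card (GG H Q (p@[a])) = card (GG H Q p) + 1)"
proof -
  have "card (palf (p@[a]) - palf p) = 1"
    using c card_Diff_subset[OF fin_palf palf_mono, of p a] by simp
  then obtain s where N: "palf (p@[a]) - palf p = {s}" by (rule card_1_singletonE)
  have s: "sublist s (p@[a])" "pal s" "\<not> sublist s p" "suffix s (p@[a])"
    using N by (auto simp: palf_def sublist_snoc)
  have uniq: "\<And>x. sublist x (p@[a]) \<Longrightarrow> pal x \<Longrightarrow> \<not> sublist x p \<Longrightarrow> x = s"
    using N by (auto simp: palf_def)
  define w where "w = drop (length p + 1 - H) (p@[a])"
  have lw: "length w = H" using HL by (simp add: w_def)
  have sw: "suffix w (p@[a])" unfolding w_def by (rule suffix_drop)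
  have keyw: "\<And>y. sublist y (p@[a]) \<Longrightarrow> \<not> sublist y p \<Longrightarrow> length y = H \<Longrightarrow> y = w"
  proof -
    fix y assume y: "sublist y (p@[a])" "\<not> sublist y p" "length y = H"
    hence "suffix y (p@[a])" by (auto simp: sublist_snoc)
    hence "suffix y w" using suffix_length_suffix[OF _ sw] y(3) lw by simp
    thus "y = w" using y(3) lw by (metis suffix_eq_len)
  qed
  have mono: "\<And>x. sublist x p \<Longrightarrow> sublist x (p@[a])"
    by (meson sublist_append_rightI sublist_order.order.trans)
  show ?thesis
  proof (cases "length s < H")
    case True
    have "suffix s w" using suffix_length_suffix[OF s(4) sw] True lw by simp
    hence h1: "\<not> sublist w p" using s(3) by (meson suffix_imp_sublist sublist_order.order.trans)
    have "prefix (rev s) (rev w)" using \<open>suffix s w\<close> by (simp add: suffix_to_prefix)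
    hence "sublist s (rev w)" using s(2) by (simp add: pal_def)
    hence h2: "\<not> sublist (rev w) p" using s(3) by (meson sublist_order.order.trans)
    have h3: "\<not> pal w"
    proof
      assume "pal w"
      hence "w = s" using uniq[of w] sw h1 by auto
      thus False using True lw by simp
    qed
    have wr: "w \<noteq> rev w" using h3 by (auto simp: pal_def)
    have E: "EE H (p@[a]) = insert w (insert (rev w) (EE H p))"
    proof (rule set_eqI, rule iffI)
      fix y assume y: "y \<in> EE H (p@[a])"
      show "y \<in> insert w (insert (rev w) (EE H p))"
      proof (cases "sublist y p \<or> sublist (rev y) p")
        case True thus ?thesis using y by (auto simp: EE_def)
      next
        case False
        hence "y = w \<or> rev y = w" using y keyw[of y] keyw[of "rev y"] by (auto simp: EE_def)
        thus ?thesis by auto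
      qed
    next
      fix y assume "y \<in> insert w (insert (rev w) (EE H p))"
      moreover have "pal (rev w) = pal w" by (auto simp: pal_def)
      ultimately show "y \<in> EE H (p@[a])" using lw h3 sw mono
        by (auto simp: EE_def)
    qed
    have "w \<notin> EE H p" "rev w \<notin> EE H p" using h1 h2 by (auto simp: EE_def)
    hence cE: "card (EE H (p@[a])) = card (EE H p) + 2"
      using E wr fin_EE[of H p] by simp
    have G: "GG H Q (p@[a]) = insert s (GG H Q p)"
    proof (rule set_eqI, rule iffI)
      fix x assume x: "x \<in> GG H Q (p@[a])"
      show "x \<in> insert s (GG H Q p)"
      proof (cases "sublist x p")
        case True thus ?thesis using x by (auto simp: GG_def)
      next
        case False thus ?thesis using x uniq[of x] by (auto simp: GG_def)
      qed
    next
      fix x assume "x \<in> insert s (GG H Q p)"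
      thus "x \<in> GG H Q (p@[a])" using s True Q mono by (auto simp: GG_def)
    qed
    have "s \<notin> GG H Q p" using s by (auto simp: GG_def)
    hence "card (GG H Q (p@[a])) = card (GG H Q p) + 1" using G fin_GG[of H Q p] by simp
    thus ?thesis using cE by simp
  next
    case False
    have G: "GG H Q (p@[a]) = GG H Q p"
    proof (rule set_eqI, rule iffI)
      fix x assume x: "x \<in> GG H Q (p@[a])"
      show "x \<in> GG H Q p"
      proof (cases "sublist x p")
        case True thus ?thesis using x by (auto simp: GG_def)
      next
        case f2: False
        hence "x = s" using x uniq[of x] by (auto simp: GG_def)
        thus ?thesis using x False by (auto simp: GG_def)
      qed
    next
      fix x assume "x \<in> GG H Q p"
      thus "x \<in> GG H Q (p@[a])" using mono by (auto simp: GG_def)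
    qed
    have ws: "suffix w s" using suffix_length_suffix[OF sw s(4)] False lw by simp
    have E: "EE H (p@[a]) = EE H p"
    proof (rule set_eqI, rule iffI)
      fix y assume y: "y \<in> EE H (p@[a])"
      show "y \<in> EE H p"
      proof (cases "sublist y p \<or> sublist (rev y) p")
        case True thus ?thesis using y by (auto simp: EE_def)
      next
        case f2: False
        hence "y = w \<or> rev y = w" using y keyw[of y] keyw[of "rev y"] by (auto simp: EE_def)
        hence ww: "\<not> sublist w p \<and> \<not> sublist (rev w) p \<and> \<not> pal w"
          using f2 y by (auto simp: EE_def pal_def)
        show ?thesis
        proof (cases "length s = H")
          case True
          hence "w = s" using ws lw by (metis suffix_eq_len)
          thus ?thesis using ww s by simp
        next
          case f3: False
          have "prefix (rev w) s" using pal_suffix_prefix[OF s(2) ws] .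
          hence "sublist (rev w) p" using pfx_in[OF s(4)] f3 False lw by simp
          thus ?thesis using ww by simp
        qed
      qed
    next
      fix y assume "y \<in> EE H p"
      thus "y \<in> EE H (p@[a])" using mono by (auto simp: EE_def)
    qed
    show ?thesis using E G by simp
  qed
qed


lemma pref_Suc: "pref u (Suc k) = pref u k @ [u k]"
  by (simp add: pref_def)

lemma pref_split: "i \<le> k \<Longrightarrow> pref u k = pref u i @ map u [i..<k]"
  unfolding pref_def by (metis map_append upt_add_eq_append zero_le le_add_diff_inverse)

lemma sub_pref: "i + n \<le> K \<Longrightarrow> sublist (map u [i..<i+n]) (pref u K)"
proof -
  assume a: "i + n \<le> K"
  have "pref u K = map u [0..<i] @ map u [i..<i+n] @ map u [i+n..<K]"
    unfolding pref_def using a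
    by (metis le_add1 le_add_diff_inverse map_append upt_add_eq_append zero_le append_assoc)
  thus ?thesis by simp
qed

lemma pref_sub_lang: "sublist x (pref u K) \<Longrightarrow> x \<in> lang u"
proof -
  assume "sublist x (pref u K)"
  then obtain ps ss where e: "pref u K = ps @ x @ ss" by (auto simp: sublist_def)
  have len: "length ps + length x \<le> K" using arg_cong[OF e, of length] by (simp add: pref_def)
  have "x = take (length x) (drop (length ps) (pref u K))" using e by simp
  also have "\<dots> = map u [length ps..<length ps + length x]"
    using len by (simp add: pref_def take_map drop_map)
  finally show ?thesis unfolding lang_def by blast
qed


theorem lemma9:
  fixes u :: "nat \<Rightarrow> 'a::finite" and q :: "'a list"
  assumes "closed_rev u"
    and "defect_inf u \<noteq> \<infinity>"
    and "q = pref u (length q)"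
    and "defect_inf u = enat (nat (defect q))"
    and "H = length q + 1"
  shows "int (complexity u H) - int (pal_complexity u H)
         = 2 * int (card {x \<in> lang u. pal x \<and> length x < H \<and> x \<notin> lang_fin q})"
proof -
  define n0 where "n0 = length q"
  have qp: "q = pref u n0" using assms(3) n0_def by simp
  have mono: "defect (pref u n0) \<le> defect (pref u k)" if "n0 \<le> k" for k
    using that
  proof (induction k rule: dec_induct)
    case base thus ?case by simp
  next
    case (step k) thus ?case using defect_step[of "pref u k" "u k"] by (simp add: pref_Suc)
  qed
  have upper: "defect (pref u k) \<le> defect q" for k
  proof -
    have "enat (nat (defect (pref u k))) \<le> defect_inf u"
      unfolding defect_inf_def by (rule SUP_upper) simp
    hence "nat (defect (pref u k)) \<le> nat (defect q)" using assms(4) by simp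
    thus ?thesis using defect_nonneg[of "pref u k"] defect_nonneg[of q] by linarith
  qed
  have cstep: "card (palf (pref u k @ [u k])) = card (palf (pref u k)) + 1" if "n0 \<le> k" for k
  proof -
    have "defect (pref u (Suc k)) = defect (pref u k)"
      using mono[of k] mono[of "Suc k"] upper[of k] upper[of "Suc k"] that qp by simp
    thus ?thesis unfolding defect_palf pref_Suc by (simp add: pref_def)
  qed
  define Q where "Q = lang_fin q"
  have inv: "card (EE H (pref u k)) = 2 * card (GG H Q (pref u k))" if "n0 \<le> k" for k
    using that
  proof (induction k rule: dec_induct)
    case base
    have "EE H (pref u n0) = {}"
      using assms(5) qp n0_def sublist_length_le by (fastforce simp: EE_def)
    moreover have "GG H Q (pref u n0) = {}"
      using qp by (auto simp: GG_def Q_def lang_fin_def)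
    ultimately show ?case by simp
  next
    case (step k)
    have HL: "H \<le> length (pref u k) + 1" using step(1) assms(5) n0_def by (simp add: pref_def)
    have Qs: "Q \<subseteq> {x. sublist x (pref u k)}"
      using pref_split[OF step(1), of u] qp
      by (auto simp: Q_def lang_fin_def intro: sublist_order.order.trans)
    from step_main[OF cstep[OF step(1)] HL Qs] step(3)
    show ?case by (auto simp: pref_Suc)
  qed
  define S where "S = {x \<in> lang u. length x \<le> H}"
  have finS: "finite S"
    by (rule finite_subset[of _ "{xs. set xs \<subseteq> UNIV \<and> length xs \<le> H}"])
       (auto simp: S_def intro: finite_lists_length_le[of UNIV H, simplified])
  define f where "f x = (SOME i. x = map u [i..<i + length x])" for x
  have fx: "x = map u [f x..<f x + length x]" if "x \<in> lang u" for x
  proof -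
    have "\<exists>i. x = map u [i..<i + length x]" using that unfolding lang_def by blast
    thus ?thesis unfolding f_def by (rule someI_ex)
  qed
  define K where "K = n0 + (\<Sum>x\<in>S. f x + length x)"
  have K0: "n0 \<le> K" by (simp add: K_def)
  have subK: "sublist x (pref u K)" if "x \<in> S" for x
  proof -
    have "f x + length x \<le> (\<Sum>x\<in>S. f x + length x)"
      using member_le_sum[of x S "\<lambda>x. f x + length x"] finS that by simp
    hence "f x + length x \<le> K" by (simp add: K_def)
    moreover have "x \<in> lang u" using that by (simp add: S_def)
    ultimately show ?thesis using sub_pref[of "f x" "length x" K u] fx[of x] by simp
  qed
  have E: "EE H (pref u K) = {w \<in> lang_n u H. \<not> pal w}"
  proof (rule set_eqI, rule iffI)
    fix w assume w: "w \<in> EE H (pref u K)"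
    have "w \<in> lang u"
    proof (cases "sublist w (pref u K)")
      case True thus ?thesis by (rule pref_sub_lang)
    next
      case False
      hence "rev w \<in> lang u" using w pref_sub_lang by (auto simp: EE_def)
      thus ?thesis using assms(1) unfolding closed_rev_def by force
    qed
    thus "w \<in> {w \<in> lang_n u H. \<not> pal w}" using w by (auto simp: EE_def lang_n_def)
  next
    fix w assume "w \<in> {w \<in> lang_n u H. \<not> pal w}"
    thus "w \<in> EE H (pref u K)" using subK[of w] by (auto simp: EE_def lang_n_def S_def)
  qed
  have G: "GG H Q (pref u K) = {x \<in> lang u. pal x \<and> length x < H \<and> x \<notin> lang_fin q}"
  proof (rule set_eqI, rule iffI)
    fix x assume "x \<in> GG H Q (pref u K)"
    thus "x \<in> {x \<in> lang u. pal x \<and> length x < H \<and> x \<notin> lang_fin q}"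
      using pref_sub_lang by (auto simp: GG_def Q_def)
  next
    fix x assume "x \<in> {x \<in> lang u. pal x \<and> length x < H \<and> x \<notin> lang_fin q}"
    thus "x \<in> GG H Q (pref u K)" using subK[of x] by (auto simp: GG_def Q_def S_def)
  qed
  have finL: "finite (lang_n u H)"
    by (rule finite_subset[OF _ finS]) (auto simp: S_def lang_n_def)
  have "lang_n u H = {w \<in> lang_n u H. pal w} \<union> {w \<in> lang_n u H. \<not> pal w}" by auto
  hence "complexity u H = pal_complexity u H + card {w \<in> lang_n u H. \<not> pal w}"
    unfolding complexity_def pal_complexity_def using finL
    by (subst card_Un_disjoint[symmetric]) auto
  thus ?thesis using inv[OF K0] E G by simp
qed

end
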